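(* For every positive integer $a$, $\Gamma(a,2a)=1$; for every integer $a\ge 2$, $\Gamma(a,2a-1)=2$.
   Context: For relatively prime positive integers $p,q$, exactly one of the equations $px+qy=\frac{(p-1)(q-1)}{2}$ (Equation 1) and $px+qy+1=\frac{(p-1)(q-1)}{2}$ (Equation 2) has a solution in nonnegative integers $(x,y)$. For positive integers $a,b$ with $d=\gcd(a,b)$, $\Gamma(a,b)=1$ if Equation 1 with $(p,q)=(a/d,b/d)$ has a nonnegative integer solution, and $\Gamma(a,b)=2$ otherwise. *)

theory Defs
  imports Main
begin

text \<open>For coprime p, q not both even, (p-1)(q-1) is even, so natural division is exact.\<close>

definition Gamma :: "nat \<Rightarrow> nat \<Rightarrow> nat" where
  "Gamma a b = (let d = gcd a b; p = a div d; q = b div d in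
     if (\<exists>x y :: nat. p * x + q * y = (p - 1) * (q - 1) div 2) then 1 else 2)"

end

theory Submission
  imports Defs
begin

lemma part1: assumes "(a::nat) \<ge> 1" shows "Gamma a (2 * a) = 1"
proof -
  have g: "gcd a (2*a) = a" by (simp add: gcd_mult_left_right_cancel)
  have "a div a = 1" "2*a div a = 2" using assms by auto
  thus ?thesis unfolding Gamma_def Let_def g by auto
qed

lemma noSol:
  fixes a x y :: nat
  assumes a2: "a \<ge> 2" and e: "a * x + (2*a - 1) * y = (a - 1) * (2*a - 1 - 1) div 2"
  shows False
proof -
  have "2*a - 1 - 1 = 2*(a-1)" by simp
  hence "(a - 1) * (2*a - 1 - 1) div 2 = (a-1)*(a-1)" by simp
  with e have e2: "a * x + (2*a - 1) * y = (a-1)*(a-1)" by simp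
  have c1: "int (a-1) = int a - 1" "int (2*a-1) = 2*int a - 1" using a2 by auto
  have "int (a * x + (2*a - 1) * y) = int ((a-1)*(a-1))" using e2 by simp
  hence "int a * int x + (2*int a - 1) * int y = (int a - 1)*(int a - 1)"
    unfolding of_nat_add of_nat_mult c1 .
  hence k: "int y + 1 = int a * (int x + 2 * int y - int a + 2)"
    by (simp add: algebra_simps)
  define k where "k = int x + 2 * int y - int a + 2"
  have "k \<ge> 1"
  proof (rule ccontr)
    assume "\<not> k \<ge> 1" hence "k \<le> 0" by simp
    hence "int a * k \<le> 0" using mult_nonneg_nonpos by (metis of_nat_0_le_iff)
    thus False using k k_def by simp
  qed
  hence "int a * k \<ge> int a * 1" by (intro mult_left_mono) auto
  hence "int y \<ge> int a - 1" using k k_def by simp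
  hence "(2*int a - 1) * int y \<ge> (2*int a - 1) * (int a - 1)"
    using a2 by (intro mult_left_mono) auto
  moreover have "(2*int a - 1) * (int a - 1) > (int a - 1)*(int a - 1)"
    using a2 by (intro mult_strict_right_mono) auto
  moreover have "int a * int x \<ge> 0" by simp
  ultimately show False
    using \<open>int a * int x + (2*int a - 1) * int y = (int a - 1)*(int a - 1)\<close> by linarith
qed

lemma part2: assumes "(a::nat) \<ge> 2" shows "Gamma a (2 * a - 1) = 2"
proof -
  have "gcd a (2*a - 1) = 1"
  proof -
    have "gcd a (2*a-1) dvd 2*a - (2*a-1)"
      by (meson dvd_diff_nat dvd_mult gcd_dvd1 gcd_dvd2)
    moreover have "2*a - (2*a-1) = 1" using assms by simp
    ultimately show ?thesis by simp
  qed
  thus ?thesis unfolding Gamma_def Let_def using noSol[OF assms] by auto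
qed

theorem corollary2p1:
  shows "(\<forall>a::nat. a \<ge> 1 \<longrightarrow> Gamma a (2 * a) = 1) \<and>
         (\<forall>a::nat. a \<ge> 2 \<longrightarrow> Gamma a (2 * a - 1) = 2)"
  using part1 part2 by blast

end
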